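(* For every integer $n\ge1$, the monomials $u^iv^jw^{n-i-j}$ occurring with nonzero coefficient in $P_{1/n}(u,v,w)$ are exactly those with $(i,j)\in\mathbb{Z}^2$, $i,j\ge0$, $i+\frac{j}{n}\ge1$ and $i+j\le n$.
   Context: Markov polynomials. Let $x,y,z$ be indeterminates. Consider the set consisting of all rationals $\rho\in[0,1]$, each written in lowest terms $\rho=a/b$ with integers $a\ge 0$, $b\ge 1$, together with the formal symbol $1/0$. Define Laurent polynomials $M_\rho(x,y,z)$ recursively by $M_{1/0}=y$, $M_{0/1}=x$, $M_{1/1}=\frac{x^2+y^2}{z}$, and: whenever $a/b$, $c/d$ are in this set with $|ad-bc|=1$ and $(a+2c)/(b+2d)\in[0,1]$, then $M_{\frac{a+2c}{b+2d}}=\big(M_{c/d}^2+M_{\frac{a+c}{b+d}}^2\big)/M_{a/b}$. This determines $M_\rho$ for every rational $\rho\in[0,1]$. Numerator. For coprime $1\le a\le b$, $P_{a/b}(u,v,w)$ denotes the homogeneous polynomial of degree $a+b-1$ such that $M_{a/b}(x,y,z)=P_{a/b}(x^2,y^2,z^2)/(x^{a-1}y^{b-1}z^{a+b-1})$; its existence is known. *)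

theory Defs
  imports "HOL-Computational_Algebra.Polynomial"
begin

text \<open>Markov Laurent polynomials along the branch 1/n, evaluated at positive reals
  (a Laurent polynomial is determined by its values on the positive orthant).
  Markov_inv n x y z = M_{1/n}(x,y,z); index 0 stands for the symbol 1/0.
  The recursion is the defining rule applied with a/b = 1/n, c/d = 0/1,
  so (a+c)/(b+d) = 1/(n+1) and (a+2c)/(b+2d) = 1/(n+2).\<close>
fun Markov_inv :: "nat \<Rightarrow> real \<Rightarrow> real \<Rightarrow> real \<Rightarrow> real" where
  "Markov_inv 0 x y z = y"
| "Markov_inv (Suc 0) x y z = (x^2 + y^2) / z"
| "Markov_inv (Suc (Suc n)) x y z =
     (x^2 + (Markov_inv (Suc n) x y z)^2) / Markov_inv n x y z"

text \<open>Polynomials in three variables u, v, w as nested univariate polynomials: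
  the outer variable is u, then v, innermost w.\<close>
definition eval3 :: "real poly poly poly \<Rightarrow> real \<Rightarrow> real \<Rightarrow> real \<Rightarrow> real" where
  "eval3 P u v w = poly (map_poly (\<lambda>q. poly (map_poly (\<lambda>r. poly r w) q) v) P) u"

definition mcoeff :: "real poly poly poly \<Rightarrow> nat \<Rightarrow> nat \<Rightarrow> nat \<Rightarrow> real" where
  "mcoeff P i j k = coeff (coeff (coeff P i) j) k"

definition P_inv :: "nat \<Rightarrow> real poly poly poly" where
  "P_inv n = (THE P. \<forall>x y z. x > 0 \<longrightarrow> y > 0 \<longrightarrow> z > 0 \<longrightarrow>
       Markov_inv n x y z = eval3 P (x^2) (y^2) (z^2) / (y^(n-1) * z^n))"

end

theory Submission
  imports Defs
begin

lemma map_poly_add_hom: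
  assumes "f 0 = 0" "\<And>a b. f (a + b) = f a + f b"
  shows "map_poly f (p + q) = map_poly f p + map_poly f q"
  by (intro poly_eqI) (simp add: coeff_map_poly assms)

lemma map_poly_diff_hom:
  assumes "f 0 = 0" "\<And>a b. f (a - b) = f a - f b"
  shows "map_poly f (p - q) = map_poly f p - map_poly f q"
  by (intro poly_eqI) (simp add: coeff_map_poly assms)

definition ev2 :: "real \<Rightarrow> real \<Rightarrow> real poly poly \<Rightarrow> real" where
  "ev2 v w q = poly (map_poly (\<lambda>r. poly r w) q) v"

lemma eval3_ev2: "eval3 P u v w = poly (map_poly (ev2 v w) P) u"
  unfolding eval3_def ev2_def by simp

lemma ev2_0[simp]: "ev2 v w 0 = 0" by (simp add: ev2_def)
lemma ev2_add: "ev2 v w (a + b) = ev2 v w a + ev2 v w b"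
  unfolding ev2_def by (subst map_poly_add_hom) auto
lemma ev2_diff: "ev2 v w (a - b) = ev2 v w a - ev2 v w b"
  unfolding ev2_def by (subst map_poly_diff_hom) auto

lemma eval3_add: "eval3 (P + Q) u v w = eval3 P u v w + eval3 Q u v w"
  unfolding eval3_ev2 by (subst map_poly_add_hom) (auto simp: ev2_add)
lemma eval3_diff: "eval3 (P - Q) u v w = eval3 P u v w - eval3 Q u v w"
  unfolding eval3_ev2 by (subst map_poly_diff_hom) (auto simp: ev2_diff)
lemma eval3_1: "eval3 1 u v w = 1"
  unfolding eval3_ev2 by (simp add: ev2_def)
lemma eval3_0: "eval3 0 u v w = 0"
  unfolding eval3_ev2 by simp

definition mu :: "real poly poly poly \<Rightarrow> real poly poly poly" where "mu P = pCons 0 P"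
definition mv :: "real poly poly poly \<Rightarrow> real poly poly poly" where "mv P = map_poly (pCons 0) P"
definition mw :: "real poly poly poly \<Rightarrow> real poly poly poly" where "mw P = map_poly (map_poly (pCons 0)) P"

lemma eval3_mu: "eval3 (mu P) u v w = u * eval3 P u v w"
  unfolding eval3_ev2 mu_def by (simp add: map_poly_pCons)

lemma ev2_pC: "ev2 v w (pCons 0 q) = v * ev2 v w q"
  unfolding ev2_def by (simp add: map_poly_pCons)

lemma ev2_mp: "ev2 v w (map_poly (pCons 0) q) = w * ev2 v w q"
proof -
  have "map_poly (\<lambda>r. poly r w) (map_poly (pCons 0) q) = smult w (map_poly (\<lambda>r. poly r w) q)"
    by (intro poly_eqI) (simp add: coeff_map_poly)
  then show ?thesis unfolding ev2_def by simp
qed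

lemma eval3_mv: "eval3 (mv P) u v w = v * eval3 P u v w"
proof -
  have "map_poly (ev2 v w) (map_poly (pCons 0) P) = smult v (map_poly (ev2 v w) P)"
    by (intro poly_eqI) (simp add: coeff_map_poly ev2_pC)
  then show ?thesis unfolding eval3_ev2 mv_def by simp
qed

lemma eval3_mw: "eval3 (mw P) u v w = w * eval3 P u v w"
proof -
  have "map_poly (ev2 v w) (map_poly (map_poly (pCons 0)) P) = smult w (map_poly (ev2 v w) P)"
    by (intro poly_eqI) (simp add: coeff_map_poly ev2_mp)
  then show ?thesis unfolding eval3_ev2 mw_def by simp
qed

lemma mcoeff_mu: "mcoeff (mu P) i j k = (if i = 0 then 0 else mcoeff P (i-1) j k)"
  unfolding mcoeff_def mu_def by (cases i) auto
lemma mcoeff_mv: "mcoeff (mv P) i j k = (if j = 0 then 0 else mcoeff P i (j-1) k)"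
  unfolding mcoeff_def mv_def by (cases j) (auto simp: coeff_map_poly)
lemma mcoeff_mw: "mcoeff (mw P) i j k = (if k = 0 then 0 else mcoeff P i j (k-1))"
  unfolding mcoeff_def mw_def by (cases k) (auto simp: coeff_map_poly)
lemma mcoeff_add: "mcoeff (P + Q) i j k = mcoeff P i j k + mcoeff Q i j k"
  unfolding mcoeff_def by simp
lemma mcoeff_1: "mcoeff 1 i j k = (if i = 0 \<and> j = 0 \<and> k = 0 then 1 else 0)"
  unfolding mcoeff_def by (auto simp: coeff_1)
lemma mcoeff_0: "mcoeff 0 i j k = 0"
  unfolding mcoeff_def by simp


fun PA :: "nat \<Rightarrow> real poly poly poly \<times> real poly poly poly" where
  "PA 0 = (1, 0)"
| "PA (Suc n) = (mv (fst (PA n)) + (mu (fst (PA n)) + mw (snd (PA n))), mu (fst (PA n)) + mw (snd (PA n)))"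

lemma addnz: "(a::real) \<ge> 0 \<Longrightarrow> b \<ge> 0 \<Longrightarrow> (a + b \<noteq> 0 \<longleftrightarrow> a \<noteq> 0 \<or> b \<noteq> 0)" by auto

lemma PA_supp:
  "(\<forall>i j k. mcoeff (snd (PA n)) i j k \<ge> 0 \<and> (mcoeff (snd (PA n)) i j k \<noteq> 0 \<longleftrightarrow> i \<ge> 1 \<and> i + j + k = n))
 \<and> (\<forall>i j k. mcoeff (fst (PA n)) i j k \<ge> 0 \<and> (mcoeff (fst (PA n)) i j k \<noteq> 0 \<longleftrightarrow> (i \<ge> 1 \<or> j = n) \<and> i + j + k = n))"
proof (induction n)
  case 0
  then show ?case by (auto simp: mcoeff_1 mcoeff_0)
next
  case (Suc n)
  have A: "mcoeff (snd (PA (Suc n))) i j k \<ge> 0 \<and> (mcoeff (snd (PA (Suc n))) i j k \<noteq> 0 \<longleftrightarrow> i \<ge> 1 \<and> i + j + k = Suc n)" for i j k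
  proof -
    have e: "mcoeff (snd (PA (Suc n))) i j k = mcoeff (mu (fst (PA n))) i j k + mcoeff (mw (snd (PA n))) i j k"
      by (simp add: mcoeff_add)
    have h1: "mcoeff (fst (PA n)) (i-1) j k \<ge> 0 \<and> (mcoeff (fst (PA n)) (i-1) j k \<noteq> 0 \<longleftrightarrow> (i-1 \<ge> 1 \<or> j = n) \<and> i-1 + j + k = n)"
      using Suc.IH by blast
    have h2: "mcoeff (snd (PA n)) i j (k-1) \<ge> 0 \<and> (mcoeff (snd (PA n)) i j (k-1) \<noteq> 0 \<longleftrightarrow> i \<ge> 1 \<and> i + j + (k-1) = n)"
      using Suc.IH by blast
    show ?thesis unfolding e mcoeff_mu mcoeff_mw
      using h1 h2 addnz[of "mcoeff (fst (PA n)) (i-1) j k" "mcoeff (snd (PA n)) i j (k-1)"]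
      by (cases i; cases k) auto
  qed
  have B: "mcoeff (fst (PA (Suc n))) i j k \<ge> 0 \<and> (mcoeff (fst (PA (Suc n))) i j k \<noteq> 0 \<longleftrightarrow> (i \<ge> 1 \<or> j = Suc n) \<and> i + j + k = Suc n)" for i j k
  proof -
    have e: "mcoeff (fst (PA (Suc n))) i j k = mcoeff (mv (fst (PA n))) i j k + mcoeff (snd (PA (Suc n))) i j k"
      by (simp add: mcoeff_add)
    have h1: "mcoeff (fst (PA n)) i (j-1) k \<ge> 0 \<and> (mcoeff (fst (PA n)) i (j-1) k \<noteq> 0 \<longleftrightarrow> (i \<ge> 1 \<or> j-1 = n) \<and> i + (j-1) + k = n)"
      using Suc.IH by blast
    show ?thesis unfolding e mcoeff_mv
      using h1 A[of i j k] addnz[of "mcoeff (fst (PA n)) i (j-1) k" "mcoeff (snd (PA (Suc n))) i j k"]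
      by (cases i; cases j) auto
  qed
  show ?case using A B by blast
qed


definition pp where "pp u v w n = eval3 (fst (PA n)) u v w"
definition aa where "aa u v w n = eval3 (snd (PA n)) u v w"

lemma pp0: "pp u v w 0 = 1" by (simp add: pp_def eval3_1)
lemma aa0: "aa u v w 0 = 0" by (simp add: aa_def eval3_0)
lemma aaS: "aa u v w (Suc n) = u * pp u v w n + w * aa u v w n"
  by (simp add: aa_def pp_def eval3_add eval3_mu eval3_mw)
lemma ppS: "pp u v w (Suc n) = v * pp u v w n + aa u v w (Suc n)"
  by (simp add: aa_def pp_def eval3_add eval3_mu eval3_mw eval3_mv)

lemma pp1: "pp u v w (Suc 0) = u + v" using ppS[of u v w 0] aaS[of u v w 0] by (simp add: pp0 aa0)

lemma pp_rec: "pp u v w (Suc (Suc n)) = (u+v+w) * pp u v w (Suc n) - v * w * pp u v w n"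
proof -
  have e: "aa u v w (Suc n) = pp u v w (Suc n) - v * pp u v w n" using ppS[of u v w n] by simp
  show ?thesis unfolding ppS[of u v w "Suc n"] aaS[of u v w "Suc n"] e by (simp add: algebra_simps)
qed

lemma pp2: "pp u v w (Suc (Suc 0)) = (u+v)^2 + u * w"
  using pp_rec[of u v w 0] by (simp add: pp0 pp1 power2_eq_square algebra_simps)

lemma cassini: "pp u v w (Suc (Suc n)) * pp u v w n = (pp u v w (Suc n))^2 + u * w * (v*w)^n"
proof (induction n)
  case 0
  then show ?case using pp2[of u v w] by (simp add: pp0 pp1)
next
  case (Suc n)
  have "pp u v w (Suc (Suc (Suc n))) * pp u v w (Suc n) - (pp u v w (Suc (Suc n)))^2
      = v * w * (pp u v w (Suc (Suc n)) * pp u v w n - (pp u v w (Suc n))^2)"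
    unfolding pp_rec[of u v w "Suc n"] pp_rec[of u v w n] by (simp add: algebra_simps power2_eq_square)
  also have "\<dots> = v * w * (u * w * (v*w)^n)" using Suc.IH by simp
  finally show ?case by (simp add: algebra_simps)
qed

lemma pp_pos: assumes "u > 0" "v > 0" "w > 0" shows "pp u v w n > 0"
proof (induction n rule: less_induct)
  case (less n)
  show ?case
  proof (cases n)
    case 0 then show ?thesis by (simp add: pp0)
  next
    case (Suc m)
    show ?thesis
    proof (cases m)
      case 0 then show ?thesis using Suc assms by (simp add: pp1)
    next
      case (Suc k)
      have pk: "pp u v w k > 0" using less \<open>n = Suc m\<close> Suc by simp
      have "pp u v w n * pp u v w k > 0"
        using cassini[of u v w k] \<open>n = Suc m\<close> Suc assms
        by (simp add: add_nonneg_pos)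
      then show ?thesis using pk by (simp add: zero_less_mult_iff)
    qed
  qed
qed

lemma markov_pp:
  assumes "x > 0" "y > 0" "z > 0"
  shows "Markov_inv n x y z * y^n * z^n = y * pp (x^2) (y^2) (z^2) n"
proof (induction n rule: less_induct)
  case (less n)
  show ?case
  proof (cases n)
    case 0 then show ?thesis by (simp add: pp0)
  next
    case (Suc m)
    show ?thesis
    proof (cases m)
      case 0 then show ?thesis using Suc assms by (simp add: pp1 power2_eq_square)
    next
      case (Suc k)
      let ?p = "pp (x^2) (y^2) (z^2)"
      have n: "n = Suc (Suc k)" using Suc \<open>n = Suc m\<close> by simp
      have IH1: "Markov_inv k x y z * y^k * z^k = y * ?p k" using less.IH[of k] less.IH[of "Suc k"] n by simp
      have IH2: "Markov_inv (Suc k) x y z * y^Suc k * z^Suc k = y * ?p (Suc k)" using less.IH[of k] less.IH[of "Suc k"] n by simp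
      have pk: "?p k > 0" using pp_pos assms by simp
      have Mk: "Markov_inv k x y z = y * ?p k / (y^k * z^k)" using IH1 assms
        by (simp add: field_simps)
      have Mk1: "Markov_inv (Suc k) x y z = y * ?p (Suc k) / (y^Suc k * z^Suc k)" using IH2 assms
        by (simp add: field_simps)
      have C: "?p (Suc (Suc k)) * ?p k = (?p (Suc k))^2 + x^2 * z^2 * (y^2*z^2)^k"
        using cassini by simp
      have Mpos: "Markov_inv k x y z > 0" using Mk pk assms by simp
      have "Markov_inv n x y z = (x^2 + (Markov_inv (Suc k) x y z)^2) / Markov_inv k x y z"
        using n by simp
      also have "\<dots> = y * ?p (Suc (Suc k)) / (y^Suc (Suc k) * z^Suc (Suc k))"
      proof -
        have "?p (Suc (Suc k)) = ((?p (Suc k))^2 + x^2 * z^2 * (y^2*z^2)^k) / ?p k"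
          using C pk by (simp add: field_simps)
        then show ?thesis unfolding Mk Mk1 using assms pk
          by (simp add: field_simps power_mult_distrib power2_eq_square)
      qed
      finally have "Markov_inv n x y z = y * ?p n / (y^n * z^n)" using n by simp
      moreover have "y^n * z^n \<noteq> 0" using assms by simp
      ultimately show ?thesis using assms by (simp add: mult.assoc)
    qed
  qed
qed


lemma poly_pos_zero:
  fixes p :: "real poly"
  assumes "\<And>x. x > 0 \<Longrightarrow> poly p x = 0"
  shows "p = 0"
proof (rule ccontr)
  assume "p \<noteq> 0"
  then have "finite {x. poly p x = 0}" by (rule poly_roots_finite)
  moreover have "{0<..} \<subseteq> {x. poly p x = 0}" using assms by auto
  ultimately have "finite {0::real<..}" by (rule finite_subset[rotated])
  then show False using infinite_Ioi by blast
qed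

lemma eval3_zero:
  assumes "\<And>u v w. u > 0 \<Longrightarrow> v > 0 \<Longrightarrow> w > 0 \<Longrightarrow> eval3 P u v w = 0"
  shows "P = 0"
proof -
  have a: "ev2 v w (coeff P i) = 0" if "v > 0" "w > 0" for v w i
  proof -
    have "map_poly (ev2 v w) P = 0"
      by (rule poly_pos_zero) (use assms that in \<open>simp add: eval3_ev2\<close>)
    then have "coeff (map_poly (ev2 v w) P) i = 0" by simp
    then show ?thesis by (simp add: coeff_map_poly)
  qed
  have b: "poly (coeff (coeff P i) j) w = 0" if "w > 0" for w i j
  proof -
    have "map_poly (\<lambda>r. poly r w) (coeff P i) = 0"
      by (rule poly_pos_zero) (use a that in \<open>simp add: ev2_def\<close>)
    then have "coeff (map_poly (\<lambda>r. poly r w) (coeff P i)) j = 0" by simp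
    then show ?thesis by (simp add: coeff_map_poly)
  qed
  have c: "coeff (coeff P i) j = 0" for i j
    by (rule poly_pos_zero) (use b in simp)
  show ?thesis by (intro poly_eqI) (simp add: c)
qed

lemma P_inv_eq:
  assumes "n \<ge> 1"
  shows "P_inv n = fst (PA n)"
  unfolding P_inv_def
proof (rule the_equality)
  have key: "Markov_inv n x y z = eval3 (fst (PA n)) (x^2) (y^2) (z^2) / (y^(n-1) * z^n)"
    if "x > 0" "y > 0" "z > 0" for x y z
  proof -
    have e: "y^n = y * y^(n-1)" using assms by (cases n) auto
    have "Markov_inv n x y z * (y * y^(n-1)) * z^n = y * eval3 (fst (PA n)) (x^2) (y^2) (z^2)"
      using markov_pp[OF that, of n] unfolding e pp_def .
    then show ?thesis using that by (simp add: field_simps)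
  qed
  then show "\<forall>x y z. x > 0 \<longrightarrow> y > 0 \<longrightarrow> z > 0 \<longrightarrow>
       Markov_inv n x y z = eval3 (fst (PA n)) (x^2) (y^2) (z^2) / (y^(n-1) * z^n)" by blast
  fix Q assume Q: "\<forall>x y z. x > 0 \<longrightarrow> y > 0 \<longrightarrow> z > 0 \<longrightarrow>
       Markov_inv n x y z = eval3 Q (x^2) (y^2) (z^2) / (y^(n-1) * z^n)"
  have "Q - fst (PA n) = 0"
  proof (rule eval3_zero)
    fix u v w :: real assume pos: "u > 0" "v > 0" "w > 0"
    define x y z where "x = sqrt u" "y = sqrt v" "z = sqrt w"
    have xyz: "x > 0" "y > 0" "z > 0" using pos by (auto simp: x_y_z_def)
    have sq: "x^2 = u" "y^2 = v" "z^2 = w" using pos by (auto simp: x_y_z_def)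
    have "eval3 Q u v w / (y^(n-1) * z^n) = eval3 (fst (PA n)) u v w / (y^(n-1) * z^n)"
    proof -
      have "Markov_inv n x y z = eval3 Q (x^2) (y^2) (z^2) / (y^(n-1) * z^n)" using Q xyz by blast
      then show ?thesis using key[OF xyz] unfolding sq by (simp only:)
    qed
    moreover have "y^(n-1) * z^n \<noteq> 0" using xyz by simp
    ultimately have "eval3 Q u v w = eval3 (fst (PA n)) u v w" using xyz by auto
    then show "eval3 (Q - fst (PA n)) u v w = 0" by (simp add: eval3_diff)
  qed
  then show "Q = fst (PA n)" by simp
qed

lemma real_cond:
  assumes "n \<ge> 1" "i + j \<le> (n::nat)"
  shows "(real i + real j / real n \<ge> 1) \<longleftrightarrow> (i \<ge> 1 \<or> j = n)"
proof (cases "i \<ge> 1")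
  case True
  then show ?thesis by (simp add: add_increasing2)
next
  case False
  then have "i = 0" by simp
  have "real j / real n \<ge> 1 \<longleftrightarrow> real j \<ge> real n" using assms by (simp add: le_divide_eq)
  then show ?thesis using \<open>i = 0\<close> assms by auto
qed

theorem corollary5p3:
  fixes n :: nat
  assumes "n \<ge> 1"
  shows "\<forall>i j k. mcoeff (P_inv n) i j k \<noteq> 0 \<longleftrightarrow>
           (k = n - i - j \<and> i + j \<le> n \<and> real i + real j / real n \<ge> 1)"
proof (intro allI)
  fix i j k
  have s: "mcoeff (fst (PA n)) i j k \<noteq> 0 \<longleftrightarrow> (i \<ge> 1 \<or> j = n) \<and> i + j + k = n"
    using PA_supp[of n] by blast
  show "mcoeff (P_inv n) i j k \<noteq> 0 \<longleftrightarrow>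
           (k = n - i - j \<and> i + j \<le> n \<and> real i + real j / real n \<ge> 1)"
  proof (cases "i + j \<le> n")
    case True
    show ?thesis unfolding P_inv_eq[OF assms] s real_cond[OF assms True] using True by auto
  next
    case False
    then show ?thesis unfolding P_inv_eq[OF assms] s by auto
  qed
qed

end
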